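(* Let $\Psi\in\Lambda'$ satisfy ${}^{\gamma}\Psi=\Psi$ and $\det\Psi\in\mathbb{C}^*$ (a nonzero complex constant). Then there exists $\alpha\in\mathbb{C}^*$ such that $\Psi=\begin{pmatrix}\alpha&0\\0&\overline{\alpha}\end{pmatrix}$.
   Context: Fix an odd integer $n=2m+1\ge3$, variables $a,b$, and $T=ab$. Let $\Lambda'$ be the group of matrices $M=\begin{pmatrix}P(T)& a^nQ(T)\\ b^nS(T)& R(T)\end{pmatrix}$ with $P,Q,R,S\in\mathbb{C}[T,T^{-1}]$ and $\det M=cT^k$ for some $c\in\mathbb{C}^*$, $k\in\mathbb{Z}$. For such $M$ define ${}^{\gamma}M=\begin{pmatrix}\overline{R}(T)& a^n\overline{S}(T)\\ b^n\overline{Q}(T)& \overline{P}(T)\end{pmatrix}$, where $\overline{P}$ denotes the Laurent polynomial obtained by complex-conjugating the coefficients of $P$. *)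

theory Defs
  imports Complex_Main "HOL-Library.Poly_Mapping"
begin

text \<open>Laurent polynomials C[T,T^-1], realised as the group algebra of (int,+) over C:
  finitely supported coefficient maps int =>0 complex with convolution product.\<close>
type_synonym lpoly = "int \<Rightarrow>\<^sub>0 complex"

definition Tpow :: "int \<Rightarrow> lpoly" where
  "Tpow k = Poly_Mapping.single k 1"

definition lconst :: "complex \<Rightarrow> lpoly" where
  "lconst c = Poly_Mapping.single 0 c"

definition lconj :: "lpoly \<Rightarrow> lpoly" where
  "lconj P = Poly_Mapping.map cnj P"

text \<open>A matrix (P(T), a^n Q(T); b^n S(T), R(T)) is encoded by its tuple (P, Q, R, S);
  since a and b are independent variables this encoding is injective.\<close>
type_synonym lmat = "lpoly \<times> lpoly \<times> lpoly \<times> lpoly"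

text \<open>det = P R - a^n b^n Q S = P R - T^n Q S.\<close>
definition ldet :: "nat \<Rightarrow> lmat \<Rightarrow> lpoly" where
  "ldet n M = (case M of (P, Q, R, S) \<Rightarrow> P * R - Tpow (int n) * Q * S)"

definition Lambda' :: "nat \<Rightarrow> lmat set" where
  "Lambda' n = {M. \<exists>c k. c \<noteq> 0 \<and> ldet n M = lconst c * Tpow k}"

definition gamma_act :: "lmat \<Rightarrow> lmat" where
  "gamma_act M = (case M of (P, Q, R, S) \<Rightarrow> (lconj R, lconj S, lconj P, lconj Q))"

end

theory Submission imports Defs begin

lemma lookup_mult_int:
  "Poly_Mapping.lookup (f * (g::lpoly)) (k::int) = Sum_any (\<lambda>l. Poly_Mapping.lookup f l * Poly_Mapping.lookup g (k - l))"
proof -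
  have "\<And>l. Sum_any (\<lambda>q. Poly_Mapping.lookup g q when k = l + q) = Poly_Mapping.lookup g (k - l)"
  proof -
    fix l
    have "(\<lambda>q. Poly_Mapping.lookup g q when k = l + q) = (\<lambda>q. if q = k - l then Poly_Mapping.lookup g q else 0)"
      by (auto simp: when_def fun_eq_iff)
    note e = this
    show "Sum_any (\<lambda>q. Poly_Mapping.lookup g q when k = l + q) = Poly_Mapping.lookup g (k - l)" unfolding e by simp
  qed
  then show ?thesis by (simp add: lookup_mult)
qed

lemma lookup_mult_top:
  fixes f g :: lpoly
  assumes "\<forall>l\<in>Poly_Mapping.keys f. l \<le> (a::int)" "\<forall>l\<in>Poly_Mapping.keys g. l \<le> b"
  shows "Poly_Mapping.lookup (f * (g::lpoly)) (a + b) = Poly_Mapping.lookup f a * Poly_Mapping.lookup g b"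
proof -
  have "(\<lambda>l. Poly_Mapping.lookup f l * Poly_Mapping.lookup g (a + b - l)) = (\<lambda>l. if l = a then Poly_Mapping.lookup f a * Poly_Mapping.lookup g b else 0)"
  proof
    fix l
    show "Poly_Mapping.lookup f l * Poly_Mapping.lookup g (a + b - l) = (if l = a then Poly_Mapping.lookup f a * Poly_Mapping.lookup g b else 0)"
    proof (cases "l = a")
      case False
      show ?thesis
      proof (cases "l < a")
        case True
        then have "a + b - l \<notin> Poly_Mapping.keys g" using assms(2) by force
        then show ?thesis using False by (simp add: in_keys_iff)
      next
        case False2: False
        then have "l \<notin> Poly_Mapping.keys f" using assms(1) False by force
        then show ?thesis using False by (simp add: in_keys_iff)
      qed
    qed simp
  qed
  note eq = this
  show ?thesis unfolding lookup_mult_int eq by simp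
qed

lemma lookup_mult_bot:
  fixes f g :: lpoly
  assumes "\<forall>l\<in>Poly_Mapping.keys f. (a::int) \<le> l" "\<forall>l\<in>Poly_Mapping.keys g. b \<le> l"
  shows "Poly_Mapping.lookup (f * (g::lpoly)) (a + b) = Poly_Mapping.lookup f a * Poly_Mapping.lookup g b"
proof -
  have "(\<lambda>l. Poly_Mapping.lookup f l * Poly_Mapping.lookup g (a + b - l)) = (\<lambda>l. if l = a then Poly_Mapping.lookup f a * Poly_Mapping.lookup g b else 0)"
  proof
    fix l
    show "Poly_Mapping.lookup f l * Poly_Mapping.lookup g (a + b - l) = (if l = a then Poly_Mapping.lookup f a * Poly_Mapping.lookup g b else 0)"
    proof (cases "l = a")
      case False
      show ?thesis
      proof (cases "l > a")
        case True
        then have "a + b - l \<notin> Poly_Mapping.keys g" using assms(2) by force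
        then show ?thesis using False by (simp add: in_keys_iff)
      next
        case False2: False
        then have "l \<notin> Poly_Mapping.keys f" using assms(1) False by force
        then show ?thesis using False by (simp add: in_keys_iff)
      qed
    qed simp
  qed
  note eq = this
  show ?thesis unfolding lookup_mult_int eq by simp
qed

lemma lookup_mult_above:
  assumes "\<forall>l\<in>Poly_Mapping.keys f. l \<le> (a::int)" "\<forall>l\<in>Poly_Mapping.keys g. l \<le> b" "k > a + b"
  shows "Poly_Mapping.lookup (f * (g::int \<Rightarrow>\<^sub>0 complex)) k = 0"
proof -
  have "k \<notin> Poly_Mapping.keys (f * g)" using keys_mult[of f g] assms by fastforce
  then show ?thesis by (simp add: in_keys_iff)
qed

lemma lookup_mult_below:
  assumes "\<forall>l\<in>Poly_Mapping.keys f. (a::int) \<le> l" "\<forall>l\<in>Poly_Mapping.keys g. b \<le> l" "k < a + b"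
  shows "Poly_Mapping.lookup (f * (g::int \<Rightarrow>\<^sub>0 complex)) k = 0"
proof -
  have "k \<notin> Poly_Mapping.keys (f * g)" using keys_mult[of f g] assms by fastforce
  then show ?thesis by (simp add: in_keys_iff)
qed

lemma lookup_lconj: "Poly_Mapping.lookup (lconj P) k = cnj (Poly_Mapping.lookup P k)"
  by (simp add: lconj_def map.rep_eq when_def)

lemma keys_lconj: "Poly_Mapping.keys (lconj P) = Poly_Mapping.keys P"
  by (auto simp: in_keys_iff lookup_lconj)

lemma lookup_Tpow_mult: "Poly_Mapping.lookup (Tpow n * F) k = Poly_Mapping.lookup F (k - n)"
proof -
  have "(\<lambda>l. Poly_Mapping.lookup (Tpow n) l * Poly_Mapping.lookup F (k - l)) = (\<lambda>l. if l = n then Poly_Mapping.lookup F (k - n) else 0)"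
    by (auto simp: Tpow_def lookup_single when_def fun_eq_iff)
  note eq = this
  show ?thesis unfolding lookup_mult_int eq by simp
qed

lemma lookup_lconst: "Poly_Mapping.lookup (lconst c) k = (if k = 0 then c else 0)"
  by (auto simp: lconst_def lookup_single when_def)

abbreviation "lk \<equiv> Poly_Mapping.lookup"
abbreviation "ks \<equiv> Poly_Mapping.keys"

lemma lookup_Tpow_mult2: "lk (Tpow n * Q * S) k = lk (Q * S) (k - n)"
  by (simp add: mult.assoc lookup_Tpow_mult)

theorem lemma3p4:
  fixes n m :: nat and \<Psi> :: lmat
  assumes "n = 2 * m + 1" and "n \<ge> 3"
    and "\<Psi> \<in> Lambda' n"
    and "gamma_act \<Psi> = \<Psi>"
    and "\<exists>c. c \<noteq> 0 \<and> ldet n \<Psi> = lconst c"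
  shows "\<exists>\<alpha>::complex. \<alpha> \<noteq> 0 \<and> \<Psi> = (lconst \<alpha>, 0, lconst (cnj \<alpha>), 0)"
proof -
  obtain P Q R S where Psi: "\<Psi> = (P, Q, R, S)" by (cases \<Psi>) auto
  have R: "R = lconj P" and S: "S = lconj Q" using assms(4) by (auto simp: Psi gamma_act_def)
  obtain c where c: "c \<noteq> 0" "P * lconj P - Tpow (int n) * Q * lconj Q = lconst c"
    using assms(5) by (auto simp: Psi ldet_def R S)
  define D where "D = P * lconj P - Tpow (int n) * Q * lconj Q"
  have Dk: "lk D k = lk (P * lconj P) k - lk (Q * lconj Q) (k - int n)" for k
    by (simp add: D_def lookup_minus lookup_Tpow_mult2)
  have Dz: "lk D k \<noteq> 0 \<Longrightarrow> k = 0" for k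
    using c by (simp add: D_def lookup_lconst split: if_splits)
  have odd: "2 * x \<noteq> int n + 2 * y" for x y :: int using assms(1) by presburger
  have top: "lk (f * lconj f) (2 * Max (ks f)) \<noteq> 0"
    "\<forall>k > 2 * Max (ks f). lk (f * lconj f) k = 0"
    "lk (f * lconj f) (2 * Min (ks f)) \<noteq> 0"
    "\<forall>k < 2 * Min (ks f). lk (f * lconj f) k = 0"
    if "f \<noteq> 0" for f :: lpoly
  proof -
    have ne: "ks f \<noteq> {}" using that by simp
    have fin: "finite (ks f)" by simp
    have mx: "\<forall>l\<in>ks f. l \<le> Max (ks f)" "\<forall>l\<in>ks (lconj f). l \<le> Max (ks f)"
      using fin Max_ge by (auto simp: keys_lconj)
    have mn: "\<forall>l\<in>ks f. Min (ks f) \<le> l" "\<forall>l\<in>ks (lconj f). Min (ks f) \<le> l"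
      using fin Min_le by (auto simp: keys_lconj)
    have "Max (ks f) \<in> ks f" "Min (ks f) \<in> ks f" using fin ne by auto
    then have nz: "lk f (Max (ks f)) \<noteq> 0" "lk f (Min (ks f)) \<noteq> 0" by (auto simp: in_keys_iff)
    have e1: "2 * Max (ks f) = Max (ks f) + Max (ks f)" "2 * Min (ks f) = Min (ks f) + Min (ks f)" by simp_all
    show "lk (f * lconj f) (2 * Max (ks f)) \<noteq> 0"
      unfolding e1 lookup_mult_top[OF mx] lookup_lconj using nz by simp
    show "\<forall>k > 2 * Max (ks f). lk (f * lconj f) k = 0"
      unfolding e1 using lookup_mult_above[OF mx] by blast
    show "lk (f * lconj f) (2 * Min (ks f)) \<noteq> 0"
      unfolding e1 lookup_mult_bot[OF mn] lookup_lconj using nz by simp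
    show "\<forall>k < 2 * Min (ks f). lk (f * lconj f) k = 0"
      unfolding e1 using lookup_mult_below[OF mn] by blast
  qed
  have Q0: "Q = 0"
  proof (rule ccontr)
    assume Qn: "Q \<noteq> 0"
    note tq = top[OF Qn]
    define q2 where "q2 = Max (ks Q)"
    define q1 where "q1 = Min (ks Q)"
    have q12: "q1 \<le> q2" using Qn by (simp add: q1_def q2_def)
    show False
    proof (cases "P = 0")
      case True
      have "lk D (int n + 2 * q2) \<noteq> 0" using Dk[of "int n + 2 * q2"] tq(1) True
        by (simp add: q2_def)
      then show False using Dz odd[of 0 q2] by auto
    next
      case False
      note tp = top[OF False]
      define p2 where "p2 = Max (ks P)"
      define p1 where "p1 = Min (ks P)"
      have A: "int n + 2 * q2 < 2 * p2"
      proof (rule ccontr)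
        assume "\<not> ?thesis"
        then have "2 * p2 < int n + 2 * q2" using odd[of p2 q2] by linarith
        then have "lk D (int n + 2 * q2) \<noteq> 0" using Dk[of "int n + 2 * q2"] tq(1) tp(2)
          by (simp add: q2_def p2_def)
        then show False using Dz odd[of 0 q2] by auto
      qed
      have "lk D (2 * p2) \<noteq> 0" using Dk[of "2 * p2"] tp(1) tq(2) A
        by (simp add: q2_def p2_def)
      then have p2: "p2 = 0" using Dz[of "2 * p2"] by simp
      have B: "int n + 2 * q1 > 2 * p1"
      proof (rule ccontr)
        assume "\<not> ?thesis"
        then have "2 * p1 > int n + 2 * q1" using odd[of p1 q1] by linarith
        then have "lk D (int n + 2 * q1) \<noteq> 0" using Dk[of "int n + 2 * q1"] tq(3) tp(4)
          by (simp add: q1_def p1_def)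
        then show False using Dz odd[of 0 q1] by auto
      qed
      have "lk D (2 * p1) \<noteq> 0" using Dk[of "2 * p1"] tp(3) tq(4) B
        by (simp add: q1_def p1_def)
      then have p1: "p1 = 0" using Dz[of "2 * p1"] by simp
      show False using A B p1 p2 q12 by linarith
    qed
  qed
  have Dk2: "lk D k = lk (P * lconj P) k" for k using Dk[of k] Q0 by simp
  have Pn: "P \<noteq> 0"
  proof
    assume "P = 0"
    then have "lk D 0 = 0" using Dk2 by simp
    then show False using c by (simp add: D_def lookup_lconst)
  qed
  note tp = top[OF Pn]
  have "lk D (2 * Max (ks P)) \<noteq> 0" "lk D (2 * Min (ks P)) \<noteq> 0" using tp Dk2 by auto
  then have mm: "Max (ks P) = 0" "Min (ks P) = 0" using Dz[of "2 * Max (ks P)"] Dz[of "2 * Min (ks P)"] by simp_all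
  have keysP: "k \<in> ks P \<Longrightarrow> k = 0" for k
  proof -
    assume k: "k \<in> ks P"
    have "k \<le> Max (ks P)" "Min (ks P) \<le> k" using k by auto
    then show "k = 0" using mm by simp
  qed
  define \<alpha> where "\<alpha> = lk P 0"
  have Peq: "P = lconst \<alpha>"
  proof (rule poly_mapping_eqI)
    fix k
    show "lk P k = lk (lconst \<alpha>) k"
      using keysP[of k] by (auto simp: lookup_lconst \<alpha>_def in_keys_iff)
  qed
  have an: "\<alpha> \<noteq> 0" using Pn Peq by (auto simp: lconst_def)
  have Req: "R = lconst (cnj \<alpha>)"
    by (rule poly_mapping_eqI) (simp add: R Peq lookup_lconj lookup_lconst)
  have Seq: "S = 0" by (rule poly_mapping_eqI) (simp add: S Q0 lookup_lconj)
  show ?thesis using an Peq Req Seq Q0 Psi by blast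
qed

end
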